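(* Fix an integer $\Delta\geq 3$. There is a function $\varepsilon:\mathbb{N}\to\mathbb{R}$, depending only on $n$ (for the fixed $\Delta$), with $\varepsilon(n)\to 0$ as $n\to\infty$, such that for every integer $n\geq 2$ and every rooted tree $T$ of order $n$ and maximum degree at most $\Delta$, $$\sum_{u\in V(T)}\min\left\{d(u),n^{\downarrow}(u)\right\}\geq (1-\varepsilon(n))\frac{\Delta-2}{(\Delta-1)^2}\,n\log_{(\Delta-1)}\left(\log_{(\Delta-1)}(n)\right).$$
   Context: For a vertex $u$ of a rooted tree $T$, $d(u)$ denotes the depth of $u$ (its distance to the root) and $n^{\downarrow}(u)$ denotes the number of vertices of $T$ that are equal to $u$ or are descendants of $u$. The $o(1)$ term of the paper is written here as $\varepsilon(n)$. *)

theory Defs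
  imports Complex_Main
begin

text \<open>A rooted tree is encoded by a finite vertex set V (of naturals), a root r \<in> V
and a parent map p with p r = r, p v \<in> V for all v \<in> V, and such that every
vertex reaches the root by iterating p.  The underlying (undirected) tree has
edges {v, p v} for v \<in> V - {r}.\<close>

definition rooted_tree :: "nat set \<Rightarrow> nat \<Rightarrow> (nat \<Rightarrow> nat) \<Rightarrow> bool" where
  "rooted_tree V r p \<longleftrightarrow> finite V \<and> r \<in> V \<and> p r = r \<and> (\<forall>v\<in>V. p v \<in> V)
     \<and> (\<forall>v\<in>V. \<exists>k. (p ^^ k) v = r)"

definition children :: "nat set \<Rightarrow> nat \<Rightarrow> (nat \<Rightarrow> nat) \<Rightarrow> nat \<Rightarrow> nat set" where
  "children V r p u = {v \<in> V. v \<noteq> r \<and> p v = u}"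

definition tree_degree :: "nat set \<Rightarrow> nat \<Rightarrow> (nat \<Rightarrow> nat) \<Rightarrow> nat \<Rightarrow> nat" where
  "tree_degree V r p u = card (children V r p u) + (if u = r then 0 else 1)"

text \<open>Depth d(u): distance from u to the root.\<close>
definition depth :: "nat \<Rightarrow> (nat \<Rightarrow> nat) \<Rightarrow> nat \<Rightarrow> nat" where
  "depth r p u = (LEAST k. (p ^^ k) u = r)"

definition subtree_size :: "nat set \<Rightarrow> (nat \<Rightarrow> nat) \<Rightarrow> nat \<Rightarrow> nat" where
  "subtree_size V p u = card {v \<in> V. \<exists>k. (p ^^ k) v = u}"

end

theory Submission
  imports Defs "HOL-Analysis.Harmonic_Numbers" "HOL-Real_Asymp.Real_Asymp"
begin


lemma funpow_in: "(\<forall>v\<in>V. p v \<in> V) \<Longrightarrow> v \<in> V \<Longrightarrow> (p ^^ k) v \<in> V"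
  by (induction k) auto

lemma depth_reach:
  assumes "rooted_tree V r p" "v \<in> V"
  shows "(p ^^ (depth r p v)) v = r"
  unfolding depth_def by (rule LeastI_ex) (use assms in \<open>auto simp: rooted_tree_def\<close>)

lemma depth_root: "depth r p r = 0"
  unfolding depth_def by simp

lemma depth_parent:
  assumes rt: "rooted_tree V r p" and v: "v \<in> V" and vr: "v \<noteq> r"
  shows "depth r p v = Suc (depth r p (p v))"
proof -
  have pv: "p v \<in> V" using rt v by (auto simp: rooted_tree_def)
  define d where "d = depth r p (p v)"
  have "(p ^^ (Suc d)) v = r" using depth_reach[OF rt pv] by (simp del: funpow.simps add: funpow_Suc_right d_def)
  hence le: "depth r p v \<le> Suc d" unfolding depth_def by (rule Least_le)
  have dv: "(p ^^ (depth r p v)) v = r" using depth_reach[OF rt v] .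
  have "depth r p v \<noteq> 0" using dv vr by (metis funpow_0)
  then obtain j where j: "depth r p v = Suc j" by (cases "depth r p v") auto
  with dv have "(p ^^ j) (p v) = r" by (simp del: funpow.simps add: funpow_Suc_right)
  hence "d \<le> j" unfolding d_def depth_def by (rule Least_le)
  with le j show ?thesis by (simp add: d_def)
qed

lemma layer_card:
  assumes rt: "rooted_tree V r p" and ch: "\<forall>u\<in>V. card (children V r p u) \<le> \<Delta>"
  shows "card {u\<in>V. depth r p u = k} \<le> \<Delta> ^ k"
proof (induction k)
  case 0
  have "{u\<in>V. depth r p u = 0} \<subseteq> {r}" using depth_parent[OF rt] by fastforce
  then have "card {u\<in>V. depth r p u = 0} \<le> card {r}" by (intro card_mono) auto
  then show ?case by simp
next
  case (Suc k)
  have fin: "finite V" using rt by (simp add: rooted_tree_def)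
  let ?L = "{u\<in>V. depth r p u = k}"
  have sub: "{u\<in>V. depth r p u = Suc k} \<subseteq> (\<Union>u\<in>?L. children V r p u)"
  proof
    fix v assume v: "v \<in> {u\<in>V. depth r p u = Suc k}"
    then have vr: "v \<noteq> r" using depth_root[of r p] by auto
    have "p v \<in> V" using rt v by (auto simp: rooted_tree_def)
    moreover have "depth r p (p v) = k" using depth_parent[OF rt _ vr] v by auto
    ultimately show "v \<in> (\<Union>u\<in>?L. children V r p u)" using v vr
      by (auto simp: children_def)
  qed
  have finU: "finite (\<Union>u\<in>?L. children V r p u)"
    by (rule finite_subset[OF _ fin]) (auto simp: children_def)
  have "card {u\<in>V. depth r p u = Suc k} \<le> card (\<Union>u\<in>?L. children V r p u)"
    by (rule card_mono[OF finU sub])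
  also have "\<dots> \<le> (\<Sum>u\<in>?L. card (children V r p u))"
    by (rule card_UN_le) (use fin in auto)
  also have "\<dots> \<le> (\<Sum>u\<in>?L. \<Delta>)" by (rule sum_mono) (use ch in auto)
  also have "\<dots> = card ?L * \<Delta>" by simp
  also have "\<dots> \<le> \<Delta> ^ k * \<Delta>" using Suc.IH by simp
  finally show ?case by (simp add: mult.commute)
qed

lemma geo_le: "(\<Delta>::nat) \<ge> 2 \<Longrightarrow> (\<Sum>k<D. \<Delta> ^ k) \<le> \<Delta> ^ D"
proof (induction D)
  case 0 then show ?case by simp
next
  case (Suc D)
  have "(\<Sum>k<Suc D. \<Delta> ^ k) \<le> 2 * \<Delta> ^ D" using Suc by simp
  also have "\<dots> \<le> \<Delta> * \<Delta> ^ D" using Suc.prems by (intro mult_right_mono) auto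
  finally show ?case by simp
qed

lemma shallow_card:
  assumes rt: "rooted_tree V r p" and ch: "\<forall>u\<in>V. card (children V r p u) \<le> \<Delta>" and D2: "\<Delta> \<ge> 2"
  shows "card {u\<in>V. depth r p u < D} \<le> \<Delta> ^ D"
proof -
  have fin: "finite V" using rt by (simp add: rooted_tree_def)
  have "{u\<in>V. depth r p u < D} = (\<Union>k<D. {u\<in>V. depth r p u = k})" by auto
  then have "card {u\<in>V. depth r p u < D} \<le> (\<Sum>k<D. card {u\<in>V. depth r p u = k})"
    using card_UN_le[of "{..<D}" "\<lambda>k. {u\<in>V. depth r p u = k}"] fin by simp
  also have "\<dots> \<le> (\<Sum>k<D. \<Delta> ^ k)" by (intro sum_mono layer_card[OF rt ch])
  also have "\<dots> \<le> \<Delta> ^ D" using geo_le D2 by blast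
  finally show ?thesis .
qed

lemma A_bound:
  assumes rt: "rooted_tree V r p"
    and ch: "\<forall>u\<in>V. card (children V r p u) \<le> b + (if u = r then 1 else 0)"
    and t1: "1 \<le> t" and tn: "t \<le> card V"
  shows "card V \<le> card {u\<in>V. t \<le> subtree_size V p u}
     + (b * card {u\<in>V. t \<le> subtree_size V p u} + 1) * (t - 1)"
proof -
  define A where "A = {u\<in>V. t \<le> subtree_size V p u}"
  have fin: "finite V" and rV: "r \<in> V" and pr: "p r = r" and pV: "\<forall>v\<in>V. p v \<in> V"
    and reach: "\<forall>v\<in>V. \<exists>k. (p ^^ k) v = r" using rt by (auto simp: rooted_tree_def)
  have "{v\<in>V. \<exists>k. (p ^^ k) v = r} = V" using reach by auto
  then have "subtree_size V p r = card V" by (simp add: subtree_size_def)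
  then have rA: "r \<in> A" using rV tn by (simp add: A_def)
  define B where "B = V - A"
  define F where "F = {w\<in>B. p w \<in> A}"
  have AV: "A \<subseteq> V" by (auto simp: A_def)
  have finA: "finite A" using fin AV finite_subset by blast
  have cover: "B \<subseteq> (\<Union>w\<in>F. {v\<in>V. \<exists>k. (p ^^ k) v = w})"
  proof
    fix v assume vB: "v \<in> B"
    then have vV: "v \<in> V" and vA: "v \<notin> A" by (auto simp: B_def)
    obtain k where "(p ^^ k) v = r" using reach vV by blast
    then have Pk: "(p ^^ k) v \<in> A" using rA by simp
    define k0 where "k0 = (LEAST j. (p ^^ j) v \<in> A)"
    have Pk0: "(p ^^ k0) v \<in> A" unfolding k0_def by (rule LeastI[of _ k]) (rule Pk)
    have k00: "k0 \<noteq> 0" using Pk0 vA by (metis funpow_0)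
    then obtain j where j: "k0 = Suc j" by (cases k0) auto
    have nPj: "(p ^^ j) v \<notin> A" using not_less_Least[of j "\<lambda>j. (p ^^ j) v \<in> A"] j
      unfolding k0_def by simp
    have wV: "(p ^^ j) v \<in> V" using funpow_in[OF pV vV] .
    have "p ((p ^^ j) v) \<in> A" using Pk0 j by simp
    then have "(p ^^ j) v \<in> F" using nPj wV by (simp add: F_def B_def)
    moreover have "v \<in> {v'\<in>V. \<exists>k. (p ^^ k) v' = (p ^^ j) v}" using vV by auto
    ultimately show "v \<in> (\<Union>w\<in>F. {v\<in>V. \<exists>k. (p ^^ k) v = w})" by blast
  qed
  have finF: "finite F" using fin by (auto simp: F_def B_def)
  have finU: "finite (\<Union>w\<in>F. {v\<in>V. \<exists>k. (p ^^ k) v = w})"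
    by (rule finite_subset[OF _ fin]) auto
  have "card B \<le> card (\<Union>w\<in>F. {v\<in>V. \<exists>k. (p ^^ k) v = w})"
    by (rule card_mono[OF finU cover])
  also have "\<dots> \<le> (\<Sum>w\<in>F. card {v\<in>V. \<exists>k. (p ^^ k) v = w})"
    by (rule card_UN_le[OF finF])
  also have "\<dots> \<le> (\<Sum>w\<in>F. t - 1)"
  proof (rule sum_mono)
    fix w assume "w \<in> F"
    then have "w \<in> V" "w \<notin> A" by (auto simp: F_def B_def)
    then have "subtree_size V p w < t" by (auto simp: A_def)
    then show "card {v\<in>V. \<exists>k. (p ^^ k) v = w} \<le> t - 1" by (simp add: subtree_size_def)
  qed
  also have "\<dots> = card F * (t - 1)" by simp
  finally have cB: "card B \<le> card F * (t - 1)" .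
  have Fsub: "F \<subseteq> (\<Union>u\<in>A. children V r p u)"
  proof
    fix w assume w: "w \<in> F"
    then have "w \<in> V" "w \<noteq> r" "p w \<in> A" using rA by (auto simp: F_def B_def)
    then show "w \<in> (\<Union>u\<in>A. children V r p u)" by (auto simp: children_def)
  qed
  have finU2: "finite (\<Union>u\<in>A. children V r p u)"
    by (rule finite_subset[OF _ fin]) (auto simp: children_def)
  have "card F \<le> card (\<Union>u\<in>A. children V r p u)"
    by (rule card_mono[OF finU2 Fsub])
  also have "\<dots> \<le> (\<Sum>u\<in>A. card (children V r p u))" by (rule card_UN_le[OF finA])
  also have "\<dots> \<le> (\<Sum>u\<in>A. b + (if u = r then 1 else 0))"
    by (rule sum_mono) (use ch AV in blast)
  also have "\<dots> = b * card A + 1" using rA finA by (simp add: sum.distrib)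
  finally have cF: "card F \<le> b * card A + 1" .
  have "card V = card A + card B" unfolding B_def
    using card_Diff_subset[OF finA AV] card_mono[OF fin AV] by simp
  also have "\<dots> \<le> card A + card F * (t - 1)" using cB by simp
  also have "\<dots> \<le> card A + (b * card A + 1) * (t - 1)" using mult_right_mono[OF cF, of "t - 1"] by linarith
  finally show ?thesis unfolding A_def .
qed



lemma card_filter_sum: "finite A \<Longrightarrow> card {x\<in>A. P x} = (\<Sum>x\<in>A. if P x then 1 else 0 :: nat)"
  by (simp add: sum.inter_filter[symmetric])

lemma count_le_min: "card {t\<in>{1..D}. t \<le> (a::nat) \<and> t \<le> c} \<le> min a c"
proof -
  have "{t\<in>{1..D}. t \<le> a \<and> t \<le> c} \<subseteq> {1..min a c}" by auto
  then have "card {t\<in>{1..D}. t \<le> a \<and> t \<le> c} \<le> card {1..min a c}" by (intro card_mono) auto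
  then show ?thesis by simp
qed

lemma comb_main:
  assumes rt: "rooted_tree V r p" and deg: "\<forall>u\<in>V. tree_degree V r p u \<le> \<Delta>" and D3: "\<Delta> \<ge> 3"
  shows "(\<Sum>t=1..D. (real (card V) - real t) / ((real \<Delta> - 1) * real t)) - real D * real \<Delta> ^ D
     \<le> (\<Sum>u\<in>V. real (min (depth r p u) (subtree_size V p u)))"
proof -
  have fin: "finite V" using rt by (simp add: rooted_tree_def)
  define b where "b = \<Delta> - 1"
  have chb: "\<forall>u\<in>V. card (children V r p u) \<le> b + (if u = r then 1 else 0)"
    using deg D3 by (auto simp: tree_degree_def b_def split: if_splits)
  have chD: "\<forall>u\<in>V. card (children V r p u) \<le> \<Delta>"
    using deg by (auto simp: tree_degree_def split: if_splits)
  define both where "both t = {u\<in>V. t \<le> depth r p u \<and> t \<le> subtree_size V p u}" for t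
  have shallow: "card {u\<in>V. depth r p u < D} \<le> \<Delta> ^ D"
    using shallow_card[OF rt chD] D3 by simp
  have step1: "(real (card V) - real t) / ((real \<Delta> - 1) * real t) - real \<Delta> ^ D \<le> real (card (both t))"
    if t: "t \<in> {1..D}" for t
  proof -
    define A where "A = {u\<in>V. t \<le> subtree_size V p u}"
    have "A \<subseteq> both t \<union> {u\<in>V. depth r p u < D}" using t by (auto simp: A_def both_def)
    then have "card A \<le> card (both t \<union> {u\<in>V. depth r p u < D})"
      by (intro card_mono) (use fin in \<open>auto simp: both_def\<close>)
    also have "\<dots> \<le> card (both t) + card {u\<in>V. depth r p u < D}" by (rule card_Un_le)
    finally have "card A \<le> card (both t) + \<Delta> ^ D" using shallow by linarith
    then have "real (card A) \<le> real (card (both t) + \<Delta> ^ D)" by (simp only: of_nat_le_iff)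
    then have cA: "real (card A) \<le> real (card (both t)) + real \<Delta> ^ D" by simp
    have bpos: "real \<Delta> - 1 > 0" using D3 by simp
    have tpos: "real t > 0" using t by simp
    have key: "real (card V) - real t \<le> (real \<Delta> - 1) * real t * real (card A)"
    proof (cases "t \<le> card V")
      case True
      have n: "card V \<le> card A + (b * card A + 1) * (t - 1)"
        using A_bound[OF rt chb _ True] t unfolding A_def by simp
      have rb: "real b = real \<Delta> - 1" using D3 by (simp add: b_def of_nat_diff)
      have rt1: "real (t - 1) = real t - 1" using t by (simp add: of_nat_diff)
      have "real (card V) \<le> real (card A) + (real b * real (card A) + 1) * (real t - 1)"
        using n rt1 by (metis of_nat_1 of_nat_add of_nat_le_iff of_nat_mult)
      then have "real (card V) - real t \<le> real (card A) * (1 + real b * (real t - 1)) - 1"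
        by (simp add: algebra_simps)
      also have "\<dots> \<le> real (card A) * (real b * real t)"
      proof -
        have "real b \<ge> 1" using D3 by (simp add: b_def)
        then have "1 + real b * (real t - 1) \<le> real b * real t" by (simp add: algebra_simps)
        then have "real (card A) * (1 + real b * (real t - 1)) \<le> real (card A) * (real b * real t)"
          by (intro mult_left_mono) auto
        then show ?thesis by linarith
      qed
      finally show ?thesis using rb by (simp add: algebra_simps)
    next
      case False
      then have "real (card V) - real t \<le> 0" by simp
      also have "0 \<le> (real \<Delta> - 1) * real t * real (card A)" using bpos tpos by simp
      finally show ?thesis .
    qed
    have "(real (card V) - real t) / ((real \<Delta> - 1) * real t) \<le> real (card A)"
    proof -
      have "(real \<Delta> - 1) * real t > 0" using bpos tpos by simp
      moreover have "real (card V) - real t \<le> real (card A) * ((real \<Delta> - 1) * real t)"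
        using key by (simp only: mult.commute)
      ultimately show ?thesis by (simp only: pos_divide_le_eq)
    qed
    with cA show ?thesis by simp
  qed
  have step2: "(\<Sum>t\<in>{1..D}. card (both t)) \<le> (\<Sum>u\<in>V. min (depth r p u) (subtree_size V p u))"
  proof -
    have "(\<Sum>t\<in>{1..D}. card (both t))
        = (\<Sum>t\<in>{1..D}. \<Sum>u\<in>V. if t \<le> depth r p u \<and> t \<le> subtree_size V p u then 1 else 0)"
      unfolding both_def by (intro sum.cong refl card_filter_sum fin)
    also have "\<dots> = (\<Sum>u\<in>V. \<Sum>t\<in>{1..D}. if t \<le> depth r p u \<and> t \<le> subtree_size V p u then 1 else 0)"
      by (rule sum.swap)
    also have "\<dots> = (\<Sum>u\<in>V. card {t\<in>{1..D}. t \<le> depth r p u \<and> t \<le> subtree_size V p u})"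
      by (intro sum.cong refl card_filter_sum[symmetric]) simp
    also have "\<dots> \<le> (\<Sum>u\<in>V. min (depth r p u) (subtree_size V p u))"
      by (intro sum_mono count_le_min)
    finally show ?thesis .
  qed
  have "(\<Sum>t=1..D. (real (card V) - real t) / ((real \<Delta> - 1) * real t)) - real D * real \<Delta> ^ D
      = (\<Sum>t=1..D. (real (card V) - real t) / ((real \<Delta> - 1) * real t) - real \<Delta> ^ D)"
    by (simp add: sum_subtractf)
  also have "\<dots> \<le> (\<Sum>t=1..D. real (card (both t)))" by (intro sum_mono step1)
  also have "\<dots> = real (\<Sum>t=1..D. card (both t))" by simp
  also have "\<dots> \<le> real (\<Sum>u\<in>V. min (depth r p u) (subtree_size V p u))"
    using step2 by linarith
  also have "\<dots> = (\<Sum>u\<in>V. real (min (depth r p u) (subtree_size V p u)))" by simp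
  finally show ?thesis .
qed

lemma asym:
  fixes \<Delta> :: nat
  assumes D3: "\<Delta> \<ge> 3"
  defines "Dn \<equiv> \<lambda>n::nat. nat \<lfloor>log (real \<Delta>) (real n) / 2\<rfloor>"
  shows "eventually (\<lambda>n. ((real \<Delta> - 2) / (real \<Delta> - 1)^2) * real n
             * log (real \<Delta> - 1) (log (real \<Delta> - 1) (real n))
         \<le> (\<Sum>t=1..Dn n. (real n - real t) / ((real \<Delta> - 1) * real t)) - real (Dn n) * real \<Delta> ^ Dn n)
     sequentially"
proof -
  define a where "a = real \<Delta>"
  define b where "b = a - 1"
  have a3: "a \<ge> 3" using D3 by (simp add: a_def)
  have b2: "b \<ge> 2" using a3 by (simp add: b_def)
  have lna: "ln a > 0" using a3 by simp
  have lnb: "ln b > 0" using b2 by simp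
  define c where "c = 1 / (2 * ln a)"
  define K where "K = (b - 1) / b^2"
  define c1 where "c1 = 1 / b - K / ln b"
  define c0 where "c0 = - ln (2 * ln a) / b + K * ln (ln b) / ln b"
  define F where "F = (\<lambda>x::real. (c0 - c * (ln x / x) - c * (ln x * x powr (1/2) / x)) + c1 * ln (ln x))"
  have c1pos: "c1 > 0"
  proof -
    have "ln (1/b) \<le> 1/b - 1" using b2 by (intro ln_le_minus_one) auto
    moreover have "ln (1/b) \<noteq> 1/b - 1"
    proof
      assume "ln (1/b) = 1/b - 1"
      then have "1/b = 1" using b2 by (intro ln_eq_minus_one) auto
      then show False using b2 by simp
    qed
    ultimately have "ln (1/b) < 1/b - 1" by simp
    then have "- ln b < 1/b - 1" using b2 by (simp add: ln_div)
    then have "b * (1 - 1/b) < b * ln b" using b2 by (intro mult_strict_left_mono) auto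
    then have h: "b - 1 < b * ln b" using b2 by (simp add: algebra_simps)
    have "K / ln b = (b - 1) / (b * b * ln b)" by (simp add: K_def power2_eq_square)
    also have "\<dots> < (b * ln b) / (b * b * ln b)"
      using h b2 lnb by (intro divide_strict_right_mono) auto
    also have "\<dots> = 1 / b" using b2 lnb by (simp add: field_simps)
    finally show ?thesis by (simp add: c1_def)
  qed
  have lim1: "((\<lambda>x::real. ln x / x) \<longlongrightarrow> 0) at_top" by real_asymp
  have lim2: "((\<lambda>x::real. ln x * x powr (1/2) / x) \<longlongrightarrow> 0) at_top" by real_asymp
  have lim3: "filterlim (\<lambda>x::real. ln (ln x)) at_top at_top" by real_asymp
  have lim4: "((\<lambda>x::real. c0 - c * (ln x / x) - c * (ln x * x powr (1/2) / x)) \<longlongrightarrow> c0 - c * 0 - c * 0) at_top"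
    by (intro tendsto_intros lim1 lim2)
  have "filterlim F at_top at_top"
    unfolding F_def
    by (rule filterlim_tendsto_add_at_top[OF lim4 filterlim_tendsto_pos_mult_at_top[OF tendsto_const c1pos lim3]])
  then have evF: "eventually (\<lambda>x. 0 \<le> F x) at_top" by (simp add: filterlim_at_top)
  have evN: "eventually (\<lambda>n. 0 \<le> F (real n)) sequentially"
    by (rule eventually_compose_filterlim[OF evF filterlim_real_sequentially])
  show ?thesis
    using evN eventually_ge_at_top[of "3::nat"]
  proof eventually_elim
    case (elim n)
    define x where "x = real n"
    have x3: "x \<ge> 3" using elim by (simp add: x_def)
    have lnx: "ln x > 0" using x3 by simp
    define y where "y = log a x / 2"
    have y_eq: "y = c * ln x" by (simp add: y_def c_def log_def)
    have ypos: "y > 0" using lnx lna by (simp add: y_eq c_def)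
    define d where "d = Dn n"
    have d_eq: "d = nat \<lfloor>y\<rfloor>" by (simp add: d_def Dn_def y_def x_def a_def)
    have fl0: "\<lfloor>y\<rfloor> \<ge> 0" using ypos by simp
    have rd: "real d = of_int \<lfloor>y\<rfloor>" using fl0 by (simp add: d_eq)
    have d_le: "real d \<le> y" using rd by simp
    have d_ge: "real d + 1 \<ge> y" using rd by linarith
    have sum_eq: "(\<Sum>t=1..d. (x - real t) / (b * real t)) = (x / b) * harm d - real d / b"
    proof -
      have "(\<Sum>t=1..d. (x - real t) / (b * real t)) = (\<Sum>t=1..d. (x / b) * inverse (real t) - 1 / b)"
        using b2 by (intro sum.cong refl) (auto simp: field_simps)
      also have "\<dots> = (x / b) * harm d - real d / b"
        by (simp add: sum_subtractf sum_distrib_left harm_def)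
      finally show ?thesis .
    qed
    have harm_ge: "harm d \<ge> ln y"
    proof -
      have "ln y \<le> ln (real d + 1)" using ypos d_ge by simp
      also have "\<dots> \<le> harm d" by (rule ln_le_harm)
      finally show ?thesis .
    qed
    have pow_le: "a ^ d \<le> x powr (1/2)"
    proof -
      have "a ^ d = a powr (real d)" using a3 by (simp add: powr_realpow)
      also have "\<dots> \<le> a powr y" using a3 d_le by (intro powr_mono) auto
      also have "\<dots> = (a powr (log a x)) powr (1/2)" by (simp add: powr_powr y_def)
      also have "\<dots> = x powr (1/2)" using a3 x3 by simp
      finally show ?thesis .
    qed
    have lny: "ln y = ln (ln x) - ln (2 * ln a)"
      using lnx lna by (simp add: y_def log_def ln_div)
    have G_ge: "(x / b) * harm d - real d / b - real d * a ^ d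
        \<ge> (x / b) * (ln (ln x) - ln (2 * ln a)) - c * ln x - c * ln x * x powr (1/2)"
    proof -
      have "(x / b) * ln y \<le> (x / b) * harm d" using harm_ge x3 b2 by (intro mult_left_mono) auto
      moreover have "real d / b \<le> c * ln x"
      proof -
        have "real d * 1 \<le> real d * b" using b2 by (intro mult_left_mono) auto
        then have "real d / b \<le> real d" using b2 by (simp add: divide_le_eq)
        then show ?thesis using d_le y_eq by simp
      qed
      moreover have "real d * a ^ d \<le> (c * ln x) * x powr (1/2)"
        using d_le y_eq pow_le a3 by (intro mult_mono) auto
      ultimately show ?thesis using lny by simp
    qed
    have X_eq: "log b (log b x) = (ln (ln x) - ln (ln b)) / ln b"
      using lnx lnb by (simp add: log_def ln_div)
    have XF: "((b + 1 - 2) / b^2) * x * log b (log b x) + x * F x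
        = (x / b) * (ln (ln x) - ln (2 * ln a)) - c * ln x - c * ln x * x powr (1/2)"
      unfolding X_eq F_def c1_def c0_def K_def using x3 lnb b2
      by (simp add: field_simps power2_eq_square)
    have "x * F x \<ge> 0" using elim x3 by (simp add: x_def)
    have ab: "a = b + 1" by (simp add: b_def)
    show ?case
      using XF G_ge sum_eq `x * F x \<ge> 0`
      unfolding d_def[symmetric] x_def[symmetric] a_def[symmetric] b_def[symmetric] ab
      by (simp add: b_def)
  qed
qed

theorem lemma4:
  fixes \<Delta> :: nat
  assumes "\<Delta> \<ge> 3"
  shows "\<exists>\<epsilon> :: nat \<Rightarrow> real. \<epsilon> \<longlonglongrightarrow> 0 \<and>
    (\<forall>n \<ge> 2. \<forall>V r p. rooted_tree V r p \<and> card V = n \<and> (\<forall>u\<in>V. tree_degree V r p u \<le> \<Delta>) \<longrightarrow>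
       (\<Sum>u\<in>V. real (min (depth r p u) (subtree_size V p u)))
         \<ge> (1 - \<epsilon> n) * ((real \<Delta> - 2) / (real \<Delta> - 1)^2) * real n
             * log (real \<Delta> - 1) (log (real \<Delta> - 1) (real n)))"
proof -
  define Dn where "Dn = (\<lambda>n::nat. nat \<lfloor>log (real \<Delta>) (real n) / 2\<rfloor>)"
  define X where "X = (\<lambda>n::nat. ((real \<Delta> - 2) / (real \<Delta> - 1)^2) * real n
             * log (real \<Delta> - 1) (log (real \<Delta> - 1) (real n)))"
  define G where "G = (\<lambda>n::nat. (\<Sum>t=1..Dn n. (real n - real t) / ((real \<Delta> - 1) * real t))
       - real (Dn n) * real \<Delta> ^ Dn n)"
  define \<epsilon> where "\<epsilon> = (\<lambda>n. if X n \<le> G n then 0 else (1::real))"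
  have ev: "eventually (\<lambda>n. X n \<le> G n) sequentially"
    using asym[OF assms] unfolding X_def G_def Dn_def by simp
  have lim: "\<epsilon> \<longlonglongrightarrow> 0"
    unfolding \<epsilon>_def by (rule tendsto_eventually) (use ev in \<open>auto elim: eventually_mono\<close>)
  have bound: "(\<Sum>u\<in>V. real (min (depth r p u) (subtree_size V p u)))
         \<ge> (1 - \<epsilon> n) * ((real \<Delta> - 2) / (real \<Delta> - 1)^2) * real n
             * log (real \<Delta> - 1) (log (real \<Delta> - 1) (real n))"
    if "rooted_tree V r p" "card V = n" "\<forall>u\<in>V. tree_degree V r p u \<le> \<Delta>" for n V r p
  proof -
    have SG: "G n \<le> (\<Sum>u\<in>V. real (min (depth r p u) (subtree_size V p u)))"
      using comb_main[OF that(1) that(3) assms, of "Dn n"] that(2) by (simp add: G_def)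
    have S0: "0 \<le> (\<Sum>u\<in>V. real (min (depth r p u) (subtree_size V p u)))"
      by (intro sum_nonneg) auto
    show ?thesis
    proof (cases "X n \<le> G n")
      case True
      then show ?thesis using SG by (simp add: \<epsilon>_def X_def mult.assoc)
    next
      case False
      then show ?thesis using S0 by (simp add: \<epsilon>_def)
    qed
  qed
  show ?thesis
    by (intro exI[of _ \<epsilon>] conjI lim allI impI) (use bound in blast)
qed

end
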